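(* Let \(G\) be a graph with \(\mathrm{surplus}(G)\geq 2\), and let \(V(G)=O\uplus I\uplus P\) be the Gallai–Edmonds decomposition of \(G\). If \(I\cup P\) is an independent set in \(G\), then: (1) there is at least one vertex \(o\in O\) which has at least two neighbours in \(O\); (2) if \(v\in O\) is a neighbour of some vertex \(o\in O\), \(G'=G[V(G)\setminus\{o\}]\), and \(V(G')=O'\uplus I'\uplus P'\) is the Gallai–Edmonds decomposition of \(G'\), then the induced subgraph \(G'[P']\) contains at least one edge.
   Context: All graphs are finite, undirected and simple. For \(X\subseteq V(G)\), \(N(X)\) is the set of vertices not in \(X\) adjacent to some vertex of \(X\). The surplus of an independent set \(X\) is \(|N(X)|-|X|\); \(\mathrm{surplus}(G)\) is the minimum surplus over all nonempty independent sets of \(G\). The Gallai–Edmonds decomposition of a graph \(H\) is the partition \(V(H)=O\uplus I\uplus P\) where \(O\) is the set of vertices \(v\) such that some maximum matching of \(H\) leaves \(v\) unsaturated, \(I=N(O)\), and \(P=V(H)\setminus(I\cup O)\). *)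

theory Defs
  imports Main
begin

definition graph :: "'a set \<Rightarrow> ('a \<Rightarrow> 'a \<Rightarrow> bool) \<Rightarrow> bool" where
  "graph V E \<longleftrightarrow> finite V \<and> (\<forall>x y. E x y \<longrightarrow> x \<in> V \<and> y \<in> V)
     \<and> (\<forall>x y. E x y \<longrightarrow> E y x) \<and> (\<forall>x. \<not> E x x)"

definition induced :: "('a \<Rightarrow> 'a \<Rightarrow> bool) \<Rightarrow> 'a set \<Rightarrow> 'a \<Rightarrow> 'a \<Rightarrow> bool" where
  "induced E S = (\<lambda>x y. E x y \<and> x \<in> S \<and> y \<in> S)"

definition nbhd :: "'a set \<Rightarrow> ('a \<Rightarrow> 'a \<Rightarrow> bool) \<Rightarrow> 'a set \<Rightarrow> 'a set" where
  "nbhd V E X = {v \<in> V - X. \<exists>x\<in>X. E x v}"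

definition independent :: "'a set \<Rightarrow> ('a \<Rightarrow> 'a \<Rightarrow> bool) \<Rightarrow> 'a set \<Rightarrow> bool" where
  "independent V E X \<longleftrightarrow> X \<subseteq> V \<and> (\<forall>x\<in>X. \<forall>y\<in>X. \<not> E x y)"

definition surplus :: "'a set \<Rightarrow> ('a \<Rightarrow> 'a \<Rightarrow> bool) \<Rightarrow> int" where
  "surplus V E = Min {int (card (nbhd V E X)) - int (card X) | X.
                        X \<noteq> {} \<and> independent V E X}"

definition edges :: "('a \<Rightarrow> 'a \<Rightarrow> bool) \<Rightarrow> 'a set set" where
  "edges E = {{x, y} | x y. E x y}"

definition matching :: "('a \<Rightarrow> 'a \<Rightarrow> bool) \<Rightarrow> 'a set set \<Rightarrow> bool" where
  "matching E M \<longleftrightarrow> M \<subseteq> edges E \<and> (\<forall>e1\<in>M. \<forall>e2\<in>M. e1 \<noteq> e2 \<longrightarrow> e1 \<inter> e2 = {})"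

definition max_matching :: "('a \<Rightarrow> 'a \<Rightarrow> bool) \<Rightarrow> 'a set set \<Rightarrow> bool" where
  "max_matching E M \<longleftrightarrow> matching E M \<and> (\<forall>M'. matching E M' \<longrightarrow> card M' \<le> card M)"

definition GE_O :: "'a set \<Rightarrow> ('a \<Rightarrow> 'a \<Rightarrow> bool) \<Rightarrow> 'a set" where
  "GE_O V E = {v \<in> V. \<exists>M. max_matching E M \<and> v \<notin> \<Union>M}"

definition GE_I :: "'a set \<Rightarrow> ('a \<Rightarrow> 'a \<Rightarrow> bool) \<Rightarrow> 'a set" where
  "GE_I V E = nbhd V E (GE_O V E)"

definition GE_P :: "'a set \<Rightarrow> ('a \<Rightarrow> 'a \<Rightarrow> bool) \<Rightarrow> 'a set" where
  "GE_P V E = V - (GE_I V E \<union> GE_O V E)"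

end

theory Submission
  imports Defs
begin


definition pm :: "'a set set \<Rightarrow> bool" where
  "pm M \<longleftrightarrow> finite M \<and> (\<forall>e\<in>M. \<exists>x y. x \<noteq> y \<and> e = {x,y})
     \<and> (\<forall>e1\<in>M. \<forall>e2\<in>M. e1 \<noteq> e2 \<longrightarrow> e1 \<inter> e2 = {})"

lemma pm_fin: "pm M \<Longrightarrow> finite M" by (simp add: pm_def)
lemma pm_two: "pm M \<Longrightarrow> e \<in> M \<Longrightarrow> \<exists>x y. x \<noteq> y \<and> e = {x,y}" by (simp add: pm_def)
lemma pm_disj: "pm M \<Longrightarrow> e1 \<in> M \<Longrightarrow> e2 \<in> M \<Longrightarrow> e1 \<noteq> e2 \<Longrightarrow> e1 \<inter> e2 = {}" by (simp add: pm_def)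

lemma pm_uniq: "pm M \<Longrightarrow> e1 \<in> M \<Longrightarrow> e2 \<in> M \<Longrightarrow> x \<in> e1 \<Longrightarrow> x \<in> e2 \<Longrightarrow> e1 = e2"
  using pm_disj by fastforce

lemma pm_other: "pm M \<Longrightarrow> x \<in> \<Union>M \<Longrightarrow> \<exists>y. y \<noteq> x \<and> {x,y} \<in> M"
proof -
  assume a: "pm M" "x \<in> \<Union>M"
  then obtain e where e: "e \<in> M" "x \<in> e" by blast
  obtain p q where pq: "p \<noteq> q" "e = {p,q}" using pm_two[OF a(1) e(1)] by blast
  show ?thesis
  proof (cases "x = p")
    case True then show ?thesis using pq e by (intro exI[of _ q]) auto
  next
    case False
    then have "x = q" using pq e by blast
    then have "{x,p} \<in> M" using pq e by (simp add: insert_commute)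
    then show ?thesis using False by (intro exI[of _ p]) auto
  qed
qed

lemma pm_subset: "pm M \<Longrightarrow> M' \<subseteq> M \<Longrightarrow> pm M'"
  unfolding pm_def by (meson finite_subset subsetD)

definition clsd :: "'a set set \<Rightarrow> 'a set set \<Rightarrow> 'a set \<Rightarrow> bool" where
  "clsd M N K \<longleftrightarrow> (\<forall>x\<in>K. \<forall>e\<in>M \<union> N. x \<in> e \<longrightarrow> e \<subseteq> K)"

definition Ends :: "'a set set \<Rightarrow> 'a set set \<Rightarrow> 'a set" where
  "Ends M N = (\<Union>N - \<Union>M) \<union> (\<Union>M - \<Union>N)"

lemma clsd_sym: "clsd M N K = clsd N M K"
  unfolding clsd_def by blast

lemma path_lemma:
  assumes "pm M" "pm N" "v \<in> \<Union>N" "v \<notin> \<Union>M"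
  shows "\<exists>K t. clsd M N K \<and> v \<in> K \<and> t \<noteq> v \<and> K \<inter> Ends M N = {v,t}"
  using assms
proof (induction "card (M \<union> N)" arbitrary: M N v rule: less_induct)
  case less
  note pmM = less.prems(1) and pmN = less.prems(2)
  obtain x where vx: "{v,x} \<in> N" "x \<noteq> v" using pm_other[OF pmN less.prems(3)] by blast
  have Nv: "\<And>e. e \<in> N \<Longrightarrow> v \<in> e \<Longrightarrow> e = {v,x}" using pm_uniq[OF pmN] vx by blast
  have Nx: "\<And>e. e \<in> N \<Longrightarrow> x \<in> e \<Longrightarrow> e = {v,x}" using pm_uniq[OF pmN] vx by blast
  have Mv: "\<And>e. e \<in> M \<Longrightarrow> v \<notin> e" using less.prems(4) by blast
  show ?case
  proof (cases "x \<in> \<Union>M")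
    case False
    have "clsd M N {v,x}" unfolding clsd_def using Nv Nx Mv False by blast
    moreover have "{v,x} \<inter> Ends M N = {v,x}" unfolding Ends_def
      using False less.prems(3,4) vx by blast
    ultimately show ?thesis using vx by blast
  next
    case True
    obtain y where xy: "{x,y} \<in> M" "y \<noteq> x" using pm_other[OF pmM True] by blast
    have yv: "y \<noteq> v" using xy less.prems(4) by blast
    have Mx: "\<And>e. e \<in> M \<Longrightarrow> x \<in> e \<Longrightarrow> e = {x,y}" using pm_uniq[OF pmM] xy by blast
    have My: "\<And>e. e \<in> M \<Longrightarrow> y \<in> e \<Longrightarrow> e = {x,y}" using pm_uniq[OF pmM] xy by blast
    show ?thesis
    proof (cases "y \<in> \<Union>N")
      case False
      have "clsd M N {v,x,y}" unfolding clsd_def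
      proof (intro ballI impI)
        fix w e assume w: "w \<in> {v,x,y}" and e: "e \<in> M \<union> N" and we: "w \<in> e"
        from w consider "w = v" | "w = x" | "w = y" by blast
        then show "e \<subseteq> {v,x,y}"
        proof cases
          case 1 then show ?thesis using Nv Mv e we by blast
        next
          case 2 then show ?thesis using Nx Mx e we by blast
        next
          case 3 then show ?thesis using My False e we by blast
        qed
      qed
      moreover have "{v,x,y} \<inter> Ends M N = {v,y}" unfolding Ends_def
        using False less.prems(3,4) vx xy True yv by blast
      ultimately show ?thesis using yv by blast
    next
      case yN: True
      obtain z where yz: "{y,z} \<in> N" "z \<noteq> y" using pm_other[OF pmN yN] by blast
      define M1 where "M1 = M - {{x,y}}"
      define N1 where "N1 = N - {{v,x}}"
      have fin: "finite (M \<union> N)" using pmM pmN unfolding pm_def by blast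
      have "M1 \<union> N1 \<subset> M \<union> N"
      proof -
        have "{v,x} \<notin> M" using Mv by blast
        then have "{v,x} \<notin> M1 \<union> N1" unfolding M1_def N1_def by blast
        then show ?thesis using vx unfolding M1_def N1_def by blast
      qed
      then have lt: "card (M1 \<union> N1) < card (M \<union> N)" using fin by (simp add: psubset_card_mono)
      have pm1: "pm M1" "pm N1" unfolding M1_def N1_def using pm_subset pmM pmN by blast+
      have "{y,z} \<noteq> {v,x}" using yv xy by (metis doubleton_eq_iff)
      then have yN1: "y \<in> \<Union>N1" unfolding N1_def using yz by blast
      have yM1: "y \<notin> \<Union>M1" unfolding M1_def using My by blast
      obtain K1 t1 where K1: "clsd M1 N1 K1" "y \<in> K1" "t1 \<noteq> y" "K1 \<inter> Ends M1 N1 = {y,t1}"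
        using less.hyps[OF lt pm1 yN1 yM1] by blast
      have vE1: "v \<notin> Ends M1 N1" unfolding Ends_def M1_def N1_def using Nv Mv by blast
      have xE1: "x \<notin> Ends M1 N1" unfolding Ends_def M1_def N1_def using Nx Mx by blast
      have t1E: "t1 \<in> Ends M1 N1" using K1(4) by blast
      have t1: "t1 \<noteq> v" "t1 \<noteq> x" using vE1 xE1 t1E by blast+
      have same: "\<And>w. w \<notin> {v,x,y} \<Longrightarrow> (w \<in> Ends M N) = (w \<in> Ends M1 N1)"
        unfolding Ends_def M1_def N1_def by auto
      define K where "K = insert v (insert x K1)"
      have "K \<inter> Ends M N = {v,t1}"
      proof
        show "K \<inter> Ends M N \<subseteq> {v, t1}"
        proof
          fix w assume w: "w \<in> K \<inter> Ends M N"
          have "w \<noteq> x" using w True vx unfolding Ends_def by blast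
          moreover have "w \<noteq> y" using w yN xy unfolding Ends_def by blast
          ultimately show "w \<in> {v,t1}" using w same[of w] K1(4) unfolding K_def by blast
        qed
        show "{v, t1} \<subseteq> K \<inter> Ends M N"
          using same[of t1] t1 K1 less.prems(3,4) unfolding K_def Ends_def by blast
      qed
      moreover have "clsd M N K" unfolding clsd_def
      proof (intro ballI impI)
        fix w e assume w: "w \<in> K" and e: "e \<in> M \<union> N" and we: "w \<in> e"
        show "e \<subseteq> K"
        proof (cases "e = {x,y} \<or> e = {v,x}")
          case True then show ?thesis using K1(2) unfolding K_def by blast
        next
          case False
          then have e1: "e \<in> M1 \<union> N1" using e unfolding M1_def N1_def by blast
          show ?thesis
          proof (cases "w \<in> K1")
            case True then show ?thesis using K1(1) e1 we unfolding clsd_def K_def by blast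
          next
            case False
            then have "w = v \<or> w = x" using w unfolding K_def by blast
            then show ?thesis using Nv Nx Mv Mx e we \<open>\<not>(e = {x,y} \<or> e = {v,x})\<close> by blast
          qed
        qed
      qed
      ultimately show ?thesis using t1 unfolding K_def by blast
    qed
  qed
qed




definition swp :: "'a set set \<Rightarrow> 'a set set \<Rightarrow> 'a set \<Rightarrow> 'a set set" where
  "swp N M K = {e\<in>N. e \<inter> K = {}} \<union> {e\<in>M. e \<inter> K \<noteq> {}}"

lemma fin_edges: "graph V E \<Longrightarrow> finite (edges E)"
proof -
  assume g: "graph V E"
  have "edges E \<subseteq> Pow V" using g unfolding edges_def graph_def by auto
  moreover have "finite V" using g unfolding graph_def by simp
  ultimately show ?thesis by (simp add: finite_subset)
qed

lemma match_pm: "graph V E \<Longrightarrow> matching E M \<Longrightarrow> pm M"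
proof -
  assume g: "graph V E" and m: "matching E M"
  have "finite M" using m fin_edges[OF g] unfolding matching_def by (auto intro: finite_subset)
  moreover have "\<forall>e\<in>M. \<exists>x y. x \<noteq> y \<and> e = {x,y}"
  proof
    fix e assume "e \<in> M"
    then obtain x y where "E x y" "e = {x,y}" using m unfolding matching_def edges_def by auto
    moreover have "x \<noteq> y" using g \<open>E x y\<close> unfolding graph_def by auto
    ultimately show "\<exists>x y. x \<noteq> y \<and> e = {x,y}" by blast
  qed
  ultimately show ?thesis using m unfolding pm_def matching_def by blast
qed

lemma swp_matching:
  assumes "matching E M" "matching E N" "clsd M N K"
  shows "matching E (swp N M K)"
proof -
  have sub: "\<And>e. e \<in> M \<Longrightarrow> e \<inter> K \<noteq> {} \<Longrightarrow> e \<subseteq> K" using assms(3) unfolding clsd_def by blast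
  have "swp N M K \<subseteq> M \<union> N" unfolding swp_def by auto
  moreover have "M \<union> N \<subseteq> edges E" using assms(1,2) unfolding matching_def by simp
  ultimately have s: "swp N M K \<subseteq> edges E" by (rule subset_trans)
  have dM: "\<And>e1 e2. e1 \<in> M \<Longrightarrow> e2 \<in> M \<Longrightarrow> e1 \<noteq> e2 \<Longrightarrow> e1 \<inter> e2 = {}"
    using assms(1) unfolding matching_def by blast
  have dN: "\<And>e1 e2. e1 \<in> N \<Longrightarrow> e2 \<in> N \<Longrightarrow> e1 \<noteq> e2 \<Longrightarrow> e1 \<inter> e2 = {}"
    using assms(2) unfolding matching_def by blast
  have "\<forall>e1\<in>swp N M K. \<forall>e2\<in>swp N M K. e1 \<noteq> e2 \<longrightarrow> e1 \<inter> e2 = {}"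
  proof (intro ballI impI)
    fix e1 e2 assume e1: "e1 \<in> swp N M K" and e2: "e2 \<in> swp N M K" and ne: "e1 \<noteq> e2"
    show "e1 \<inter> e2 = {}"
    proof (cases "e1 \<inter> K = {}")
      case c1: True
      show ?thesis
      proof (cases "e2 \<inter> K = {}")
        case True
        have "e1 \<in> N" using c1 e1 unfolding swp_def by blast
        moreover have "e2 \<in> N" using True e2 unfolding swp_def by blast
        ultimately show ?thesis using ne dN by blast
      next
        case False
        then have "e2 \<in> M" using e2 unfolding swp_def by blast
        then have "e2 \<subseteq> K" using False sub by blast
        then show ?thesis using c1 by blast
      qed
    next
      case c1: False
      then have k0: "e1 \<in> M" using e1 unfolding swp_def by blast
      then have k1: "e1 \<subseteq> K" "e1 \<in> M" using c1 sub by blast+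
      show ?thesis
      proof (cases "e2 \<inter> K = {}")
        case True then show ?thesis using k1 by blast
      next
        case False then have "e2 \<in> M" using e2 unfolding swp_def by blast
        then show ?thesis using k1 ne dM by blast
      qed
    qed
  qed
  then show ?thesis using s unfolding matching_def by blast
qed

lemma swp_card:
  assumes "finite M" "finite N"
  shows "card (swp N M K) + card {e\<in>N. e \<inter> K \<noteq> {}} = card N + card {e\<in>M. e \<inter> K \<noteq> {}}"
proof -
  have d1: "card (swp N M K) = card {e\<in>N. e \<inter> K = {}} + card {e\<in>M. e \<inter> K \<noteq> {}}"
    unfolding swp_def by (rule card_Un_disjoint) (use assms in auto)
  have "N = {e\<in>N. e \<inter> K = {}} \<union> {e\<in>N. e \<inter> K \<noteq> {}}" by blast
  then have "card N = card {e\<in>N. e \<inter> K = {}} + card {e\<in>N. e \<inter> K \<noteq> {}}"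
    by (metis (no_types, lifting) assms(2) card_Un_disjoint disjoint_iff finite_Un mem_Collect_eq)
  then show ?thesis using d1 by simp
qed

lemma swp_cov: "clsd M N K \<Longrightarrow> \<Union>(swp N M K) \<subseteq> (\<Union>N - K) \<union> (\<Union>M \<inter> K)"
  unfolding swp_def clsd_def by blast

lemma count_eq:
  assumes g: "graph V E" and mM: "max_matching E M" and mN: "max_matching E N" and c: "clsd M N K"
  shows "card {e\<in>M. e \<inter> K \<noteq> {}} = card {e\<in>N. e \<inter> K \<noteq> {}}"
proof -
  have pM: "pm M" and pN: "pm N" using match_pm g mM mN unfolding max_matching_def by blast+
  have fM: "finite M" "finite N" using pM pN pm_fin by blast+
  have c2: "clsd N M K" using c clsd_sym by blast
  have m1: "matching E (swp N M K)" using swp_matching mM mN c unfolding max_matching_def by blast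
  have m2: "matching E (swp M N K)" using swp_matching mM mN c2 unfolding max_matching_def by blast
  have "card (swp N M K) \<le> card N" using m1 mN unfolding max_matching_def by blast
  moreover have "card (swp M N K) \<le> card M" using m2 mM unfolding max_matching_def by blast
  ultimately show ?thesis using swp_card[OF fM(1,2), of K] swp_card[OF fM(2,1), of K] by linarith
qed

lemma swp_max:
  assumes g: "graph V E" and mM: "max_matching E M" and mN: "max_matching E N" and c: "clsd M N K"
  shows "max_matching E (swp N M K)"
proof -
  have pM: "pm M" and pN: "pm N" using match_pm g mM mN unfolding max_matching_def by blast+
  have fM: "finite M" "finite N" using pM pN pm_fin by blast+
  have m1: "matching E (swp N M K)" using swp_matching mM mN c unfolding max_matching_def by blast
  have "card (swp N M K) = card N" using swp_card[OF fM(1,2), of K] count_eq[OF assms] by linarith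
  then show ?thesis using m1 mN unfolding max_matching_def by simp
qed

lemma cov_card: "pm F \<Longrightarrow> card (\<Union>F) = 2 * card F"
proof -
  assume p: "pm F"
  have "card (\<Union>F) = sum card F"
  proof (rule card_Union_disjoint)
    show "pairwise disjnt F" using p unfolding pm_def pairwise_def disjnt_def by blast
    show "\<And>A. A \<in> F \<Longrightarrow> finite A" using pm_two[OF p] by fastforce
  qed
  also have "\<dots> = sum (\<lambda>_. 2) F"
  proof (rule sum.cong)
    fix e assume "e \<in> F"
    then obtain x y where "x \<noteq> y" "e = {x,y}" using pm_two[OF p] by blast
    then show "card e = 2" by simp
  qed simp
  finally show ?thesis by simp
qed

lemma K_cov: "clsd M N K \<Longrightarrow> K \<inter> \<Union>M = \<Union>{e\<in>M. e \<inter> K \<noteq> {}}"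
  unfolding clsd_def by blast

lemma K_cov_eq:
  assumes g: "graph V E" and mM: "max_matching E M" and mN: "max_matching E N" and c: "clsd M N K"
  shows "card (K \<inter> \<Union>M) = card (K \<inter> \<Union>N)"
proof -
  have pM: "pm M" and pN: "pm N" using match_pm g mM mN unfolding max_matching_def by blast+
  have c2: "clsd N M K" using c clsd_sym by blast
  have "card (K \<inter> \<Union>M) = 2 * card {e\<in>M. e \<inter> K \<noteq> {}}"
    using K_cov[OF c] cov_card pm_subset[OF pM] by (metis (no_types, lifting) mem_Collect_eq subsetI)
  moreover have "card (K \<inter> \<Union>N) = 2 * card {e\<in>N. e \<inter> K \<noteq> {}}"
    using K_cov[OF c2] cov_card pm_subset[OF pN] by (metis (no_types, lifting) mem_Collect_eq subsetI)
  ultimately show ?thesis using count_eq[OF assms] by simp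
qed

lemma max_exists: "graph V E \<Longrightarrow> \<exists>M. max_matching E M"
proof -
  assume g: "graph V E"
  define S where "S = {M. matching E M}"
  have fS: "finite S" unfolding S_def matching_def using fin_edges[OF g]
    by (metis (no_types, lifting) Collect_mono Pow_def finite_Pow_iff rev_finite_subset)
  have "{} \<in> S" unfolding S_def matching_def by simp
  then have ne: "card ` S \<noteq> {}" by blast
  obtain M where M: "M \<in> S" "card M = Max (card ` S)"
    using Max_in[OF finite_imageI[OF fS] ne] by auto
  have "\<forall>M'. matching E M' \<longrightarrow> card M' \<le> card M"
    using M fS unfolding S_def by simp
  then show ?thesis using M unfolding S_def max_matching_def by blast
qed

lemma augment:
  assumes g: "graph V E" and m: "max_matching E M" and ab: "E a b" and a: "a \<notin> \<Union>M" and b: "b \<notin> \<Union>M"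
  shows False
proof -
  have fM: "finite M" using match_pm g m pm_fin unfolding max_matching_def by blast
  have "{a,b} \<in> edges E" using ab unfolding edges_def by auto
  then have "matching E (insert {a,b} M)" using m a b unfolding max_matching_def matching_def by blast
  moreover have "{a,b} \<notin> M" using a by blast
  then have "card (insert {a,b} M) = card M + 1" using fM by simp
  ultimately show False using m unfolding max_matching_def by fastforce
qed

lemma exch:
  assumes g: "graph V E" and m: "max_matching E M" and vw: "{v,w} \<in> M" and z: "z \<notin> \<Union>M" and zv: "E z v"
  shows "max_matching E (insert {z,v} (M - {{v,w}})) \<and> w \<notin> \<Union>(insert {z,v} (M - {{v,w}}))"
proof -
  have pM: "pm M" using match_pm g m unfolding max_matching_def by blast
  have fM: "finite M" using pM pm_fin by blast
  have vw': "v \<noteq> w"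
  proof
    assume "v = w"
    then have "{v,w} = {v}" by simp
    then obtain x y where xy: "x \<noteq> y" "{v} = {x,y}" using pm_two[OF pM vw] by auto
    then have "x \<in> {v}" "y \<in> {v}" by auto
    then show False using xy(1) by auto
  qed
  have Mv: "\<And>e. e \<in> M \<Longrightarrow> v \<in> e \<Longrightarrow> e = {v,w}" using pm_uniq[OF pM] vw by auto
  have Mw: "\<And>e. e \<in> M \<Longrightarrow> w \<in> e \<Longrightarrow> e = {v,w}" using pm_uniq[OF pM] vw by auto
  have zw: "z \<noteq> w" using z vw by auto
  have zM: "\<And>e. e \<in> M \<Longrightarrow> z \<notin> e" using z by auto
  have ze: "{z,v} \<in> edges E" using zv unfolding edges_def by auto
  have dM: "\<And>e1 e2. e1 \<in> M \<Longrightarrow> e2 \<in> M \<Longrightarrow> e1 \<noteq> e2 \<Longrightarrow> e1 \<inter> e2 = {}"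
    using pm_disj[OF pM] by blast
  have sub: "insert {z,v} (M - {{v,w}}) \<subseteq> edges E" using ze m unfolding max_matching_def matching_def by auto
  have dis: "\<forall>e1\<in>insert {z,v} (M - {{v,w}}). \<forall>e2\<in>insert {z,v} (M - {{v,w}}). e1 \<noteq> e2 \<longrightarrow> e1 \<inter> e2 = {}"
  proof (intro ballI impI)
    fix e1 e2 assume e1: "e1 \<in> insert {z,v} (M - {{v,w}})" and e2: "e2 \<in> insert {z,v} (M - {{v,w}})" and ne: "e1 \<noteq> e2"
    have key: "\<And>e. e \<in> M - {{v,w}} \<Longrightarrow> {z,v} \<inter> e = {}"
    proof -
      fix e assume e: "e \<in> M - {{v,w}}"
      then have "z \<notin> e" using zM by auto
      moreover have "v \<notin> e" using e Mv by auto
      ultimately show "{z,v} \<inter> e = {}" by auto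
    qed
    show "e1 \<inter> e2 = {}"
    proof (cases "e1 = {z,v}")
      case True
      then have "e2 \<in> M - {{v,w}}" using e2 ne by auto
      then show ?thesis using key True by auto
    next
      case False
      then have e1M: "e1 \<in> M - {{v,w}}" using e1 by auto
      show ?thesis
      proof (cases "e2 = {z,v}")
        case True then show ?thesis using key[OF e1M] by auto
      next
        case False
        then have "e2 \<in> M" using e2 by auto
        then show ?thesis using dM e1M ne by auto
      qed
    qed
  qed
  have mt: "matching E (insert {z,v} (M - {{v,w}}))" using sub dis unfolding matching_def by simp
  have "{z,v} \<notin> M - {{v,w}}" using zM by auto
  then have c1: "card (insert {z,v} (M - {{v,w}})) = Suc (card (M - {{v,w}}))"
    using fM by (simp add: card_insert_disjoint)
  have "card M = Suc (card (M - {{v,w}}))" using fM vw by (rule card.remove)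
  then have "card (insert {z,v} (M - {{v,w}})) = card M" using c1 by simp
  then have "max_matching E (insert {z,v} (M - {{v,w}}))" using mt m unfolding max_matching_def by simp
  moreover have "w \<notin> \<Union>(insert {z,v} (M - {{v,w}}))"
  proof
    assume "w \<in> \<Union>(insert {z,v} (M - {{v,w}}))"
    then obtain e where e: "e \<in> insert {z,v} (M - {{v,w}})" "w \<in> e" by blast
    show False
    proof (cases "e = {z,v}")
      case True then show False using e zw vw' by auto
    next
      case False then show False using e Mw by auto
    qed
  qed
  ultimately show ?thesis by blast
qed




fun oreach :: "'a set \<Rightarrow> ('a \<Rightarrow> 'a \<Rightarrow> bool) \<Rightarrow> nat \<Rightarrow> 'a \<Rightarrow> 'a \<Rightarrow> bool" where
  "oreach S E 0 a b = (a = b)"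
| "oreach S E (Suc n) a b = (\<exists>c\<in>S. oreach S E n a c \<and> E c b)"

lemma graph_sym: "graph V E \<Longrightarrow> E x y \<Longrightarrow> E y x" unfolding graph_def by blast
lemma graph_irr: "graph V E \<Longrightarrow> \<not> E x x" unfolding graph_def by blast
lemma graph_V: "graph V E \<Longrightarrow> E x y \<Longrightarrow> x \<in> V \<and> y \<in> V" unfolding graph_def by blast

lemma edgeE: "graph V E \<Longrightarrow> matching E M \<Longrightarrow> {x,y} \<in> M \<Longrightarrow> E x y"
proof -
  assume g: "graph V E" and m: "matching E M" and e: "{x,y} \<in> M"
  then have "{x,y} \<in> edges E" unfolding matching_def by auto
  then obtain a b where ab: "{x,y} = {a,b}" "E a b" unfolding edges_def by auto
  then have "(x = a \<and> y = b) \<or> (x = b \<and> y = a)" by (simp add: doubleton_eq_iff)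
  then show "E x y" using ab(2) graph_sym[OF g] by auto
qed

lemma inO: "v \<in> V \<Longrightarrow> max_matching E M \<Longrightarrow> v \<notin> \<Union>M \<Longrightarrow> v \<in> GE_O V E"
  unfolding GE_O_def by blast

lemma gallai:
  assumes g: "graph V E"
  shows "oreach (GE_O V E) E n a b \<Longrightarrow> max_matching E N \<Longrightarrow> a \<in> GE_O V E \<Longrightarrow> b \<in> GE_O V E
    \<Longrightarrow> a \<noteq> b \<Longrightarrow> a \<notin> \<Union>N \<Longrightarrow> b \<notin> \<Union>N \<Longrightarrow> False"
proof (induction n arbitrary: a b N rule: less_induct)
  case (less n)
  note IH = less.IH
  show False
  proof (cases n)
    case 0 then show False using less.prems(1,5) by simp
  next
    case (Suc m)
    obtain c where c: "c \<in> GE_O V E" "oreach (GE_O V E) E m a c" "E c b"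
      using less.prems(1) Suc by auto
    show False
    proof (cases "c = a")
      case True then show False using augment[OF g less.prems(2)] c(3) less.prems(6,7) by blast
    next
      case False
      have m0: "m \<noteq> 0" using False c(2) by (cases m) auto
      have mn: "m < n" "1 < n" using Suc m0 by auto
      have cb: "c \<noteq> b" using c(3) graph_irr[OF g] by blast
      have o1: "oreach (GE_O V E) E 1 c b" using c by auto
      obtain L where L: "max_matching E L" "c \<notin> \<Union>L" using c(1) unfolding GE_O_def by blast
      have aL: "a \<in> \<Union>L"
      proof (rule ccontr)
        assume "a \<notin> \<Union>L"
        then show False using IH[OF mn(1) c(2) L(1) less.prems(3) c(1)] False L(2) by blast
      qed
      have bL: "b \<in> \<Union>L"
      proof (rule ccontr)
        assume "b \<notin> \<Union>L"
        then show False using IH[OF mn(2) o1 L(1) c(1) less.prems(4) cb] L(2) by blast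
      qed
      have cN: "c \<in> \<Union>N"
      proof (rule ccontr)
        assume "c \<notin> \<Union>N"
        then show False using IH[OF mn(1) c(2) less.prems(2,3) c(1)] False less.prems(6) by blast
      qed
      have pN: "pm N" and pL: "pm L" using match_pm g less.prems(2) L(1) unfolding max_matching_def by blast+
      have Ea: "a \<in> Ends N L" and Eb: "b \<in> Ends N L" and Ec: "c \<in> Ends N L"
        unfolding Ends_def using aL bL cN L(2) less.prems(6,7) by blast+
      obtain Ka ta where Ka: "clsd N L Ka" "a \<in> Ka" "ta \<noteq> a" "Ka \<inter> Ends N L = {a,ta}"
        using path_lemma[OF pN pL aL less.prems(6)] by blast
      obtain Kb tb where Kb: "clsd N L Kb" "b \<in> Kb" "tb \<noteq> b" "Kb \<inter> Ends N L = {b,tb}"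
        using path_lemma[OF pN pL bL less.prems(7)] by blast
      have cKa: "c \<in> Ka"
      proof (rule ccontr)
        assume nc: "c \<notin> Ka"
        have mx: "max_matching E (swp L N Ka)" using swp_max[OF g less.prems(2) L(1) Ka(1)] .
        have cv: "\<Union>(swp L N Ka) \<subseteq> (\<Union>L - Ka) \<union> (\<Union>N \<inter> Ka)" using swp_cov[OF Ka(1)] .
        have "a \<notin> \<Union>(swp L N Ka)" using cv Ka(2) less.prems(6) by blast
        moreover have "c \<notin> \<Union>(swp L N Ka)" using cv nc L(2) by blast
        ultimately show False using IH[OF mn(1) c(2) mx less.prems(3) c(1)] False by blast
      qed
      have cKb: "c \<in> Kb"
      proof (rule ccontr)
        assume nc: "c \<notin> Kb"
        have mx: "max_matching E (swp L N Kb)" using swp_max[OF g less.prems(2) L(1) Kb(1)] .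
        have cv: "\<Union>(swp L N Kb) \<subseteq> (\<Union>L - Kb) \<union> (\<Union>N \<inter> Kb)" using swp_cov[OF Kb(1)] .
        have "b \<notin> \<Union>(swp L N Kb)" using cv Kb(2) less.prems(7) by blast
        moreover have "c \<notin> \<Union>(swp L N Kb)" using cv nc L(2) by blast
        ultimately show False using IH[OF mn(2) o1 mx c(1) less.prems(4) cb] by blast
      qed
      have "c \<in> {a,ta}" using Ka(4) cKa Ec by blast
      then have ta: "ta = c" using False by auto
      have "c \<in> {b,tb}" using Kb(4) cKb Ec by blast
      then have tb: "tb = c" using cb by auto
      have "b \<notin> Ka"
      proof
        assume "b \<in> Ka"
        then have "b \<in> {a,ta}" using Ka(4) Eb by blast
        then show False using ta less.prems(5) cb by auto
      qed
      have "a \<notin> Kb"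
      proof
        assume "a \<in> Kb"
        then have "a \<in> {b,tb}" using Kb(4) Ea by blast
        then show False using tb less.prems(5) False by auto
      qed
      define K where "K = Ka \<inter> Kb"
      have cK: "clsd N L K" using Ka(1) Kb(1) unfolding K_def clsd_def by blast
      have KE: "K \<inter> Ends N L = {c}"
      proof
        show "K \<inter> Ends N L \<subseteq> {c}"
        proof
          fix x assume x: "x \<in> K \<inter> Ends N L"
          then have "x \<in> {a,ta}" using Ka(4) unfolding K_def by blast
          then have xa: "x = a \<or> x = c" using ta by simp
          have "x \<in> Kb" using x unfolding K_def by blast
          then have "x \<noteq> a" using \<open>a \<notin> Kb\<close> by metis
          then show "x \<in> {c}" using xa by simp
        qed
        show "{c} \<subseteq> K \<inter> Ends N L" using cKa cKb Ec unfolding K_def by simp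
      qed
      have eq: "card (K \<inter> \<Union>N) = card (K \<inter> \<Union>L)" using K_cov_eq[OF g less.prems(2) L(1) cK] .
      have finN: "finite (\<Union>N)"
      proof (rule finite_Union)
        show "finite N" using pm_fin[OF pN] .
        show "\<And>e. e \<in> N \<Longrightarrow> finite e" using pm_two[OF pN] by fastforce
      qed
      have sub: "K \<inter> \<Union>L \<subseteq> (K \<inter> \<Union>N) - {c}"
      proof
        fix x assume x: "x \<in> K \<inter> \<Union>L"
        have "x \<noteq> c" using x L(2) by blast
        moreover have "x \<in> \<Union>N"
        proof (rule ccontr)
          assume "x \<notin> \<Union>N"
          then have "x \<in> K \<inter> Ends N L" using x unfolding Ends_def by blast
          then show False using KE \<open>x \<noteq> c\<close> by blast
        qed
        ultimately show "x \<in> (K \<inter> \<Union>N) - {c}" using x by blast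
      qed
      have "c \<in> K \<inter> \<Union>N" using cKa cKb cN unfolding K_def by blast
      then have "card ((K \<inter> \<Union>N) - {c}) < card (K \<inter> \<Union>N)"
        using finN by (meson card_Diff1_less finite_Int)
      moreover have "card (K \<inter> \<Union>L) \<le> card ((K \<inter> \<Union>N) - {c})"
        using sub finN by (meson card_mono finite_Diff finite_Int)
      ultimately show False using eq by linarith
    qed
  qed
qed




lemma other_edge:
  assumes g: "graph V E" and m: "matching E M" and x: "x \<in> \<Union>M"
  shows "\<exists>y. {x,y} \<in> M \<and> E x y \<and> y \<noteq> x \<and> y \<in> V"
proof -
  have pM: "pm M" using match_pm[OF g m] .
  obtain y where y: "y \<noteq> x" "{x,y} \<in> M" using pm_other[OF pM x] by blast
  have "E x y" using edgeE[OF g m y(2)] .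
  then show ?thesis using y graph_V[OF g] by blast
qed

lemma part1:
  assumes g: "graph V E" and ne: "V \<noteq> {}" and s: "surplus V E \<ge> 2"
    and ind: "independent V E (GE_I V E \<union> GE_P V E)"
    and cover: "\<And>x. x \<in> V \<Longrightarrow> x \<in> GE_O V E \<or> x \<in> GE_I V E"
    and IO: "\<And>x. x \<in> GE_I V E \<Longrightarrow> x \<notin> GE_O V E"
  shows "\<exists>z\<in>GE_O V E. \<exists>u\<in>GE_O V E. \<exists>w\<in>GE_O V E. u \<noteq> w \<and> E z u \<and> E z w"
proof (rule ccontr)
  assume H: "\<not> ?thesis"
  have OV: "GE_O V E \<subseteq> V" unfolding GE_O_def by blast
  have indI: "\<And>x y. x \<in> GE_I V E \<Longrightarrow> y \<in> GE_I V E \<Longrightarrow> \<not> E x y"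
    using ind unfolding independent_def by blast
  show False
  proof (cases "\<exists>u\<in>GE_O V E. \<exists>v\<in>GE_O V E. E u v")
    case True
    then obtain u v where uv: "u \<in> GE_O V E" "v \<in> GE_O V E" "E u v" by blast
    obtain M where M: "max_matching E M" "u \<notin> \<Union>M" using uv(1) unfolding GE_O_def by blast
    have mM: "matching E M" using M(1) unfolding max_matching_def by blast
    have "v \<in> \<Union>M" using augment[OF g M(1) uv(3) M(2)] by blast
    then obtain w where w: "{v,w} \<in> M" "E v w" "w \<noteq> v" "w \<in> V" using other_edge[OF g mM] by blast
    have wu: "w \<noteq> u" using w(1) M(2) by blast
    have "w \<notin> GE_O V E"
    proof
      assume "w \<in> GE_O V E"
      moreover have "E v u" using graph_sym[OF g uv(3)] .
      ultimately show False using H uv wu w(2) by blast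
    qed
    then have wI: "w \<in> GE_I V E" using cover w(4) by blast
    have "max_matching E (insert {u,v} (M - {{v,w}})) \<and> w \<notin> \<Union>(insert {u,v} (M - {{v,w}}))"
      using exch[OF g M(1) w(1) M(2) uv(3)] .
    then have "w \<in> GE_O V E" using inO[OF w(4)] by blast
    then show False using IO wI by blast
  next
    case False
    have Oind: "independent V E (GE_O V E)" unfolding independent_def using OV False by blast
    have One: "GE_O V E \<noteq> {}"
    proof
      assume O0: "GE_O V E = {}"
      then have "GE_I V E = {}" unfolding GE_I_def nbhd_def by simp
      then show False using O0 cover ne by blast
    qed
    then obtain p0 where o: "p0 \<in> GE_O V E" by blast
    obtain M where M: "max_matching E M" "p0 \<notin> \<Union>M" using o unfolding GE_O_def by blast
    have mM: "matching E M" using M(1) unfolding max_matching_def by blast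
    have pM: "pm M" using match_pm[OF g mM] .
    have fV: "finite V" using g unfolding graph_def by blast
    have IV: "GE_I V E \<subseteq> V" unfolding GE_I_def nbhd_def by blast
    have Icov: "\<And>i. i \<in> GE_I V E \<Longrightarrow> i \<in> \<Union>M"
    proof (rule ccontr)
      fix i assume i: "i \<in> GE_I V E" "i \<notin> \<Union>M"
      then have "i \<in> GE_O V E" using inO[OF _ M(1)] IV by blast
      then show False using IO i(1) by blast
    qed
    have eO: "\<And>e. e \<in> M \<Longrightarrow> e \<inter> GE_O V E \<noteq> {}"
    proof -
      fix e assume e: "e \<in> M"
      obtain x y where xy: "x \<noteq> y" "e = {x,y}" using pm_two[OF pM e] by blast
      have Exy: "E x y" using edgeE[OF g mM] e xy(2) by blast
      have "x \<in> V" "y \<in> V" using graph_V[OF g Exy] by auto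
      moreover have "\<not> (x \<in> GE_I V E \<and> y \<in> GE_I V E)" using indI Exy by blast
      ultimately have "x \<in> GE_O V E \<or> y \<in> GE_O V E" using cover by blast
      then show "e \<inter> GE_O V E \<noteq> {}" using xy(2) by blast
    qed
    define h where "h = (\<lambda>i. SOME e. e \<in> M \<and> i \<in> e)"
    have h: "\<And>i. i \<in> GE_I V E \<Longrightarrow> h i \<in> M \<and> i \<in> h i"
    proof -
      fix i assume "i \<in> GE_I V E"
      then have "\<exists>e. e \<in> M \<and> i \<in> e" using Icov by blast
      then show "h i \<in> M \<and> i \<in> h i" unfolding h_def by (rule someI_ex)
    qed
    have "inj_on h (GE_I V E)"
    proof (rule inj_onI)
      fix i j assume i: "i \<in> GE_I V E" and j: "j \<in> GE_I V E" and eq: "h i = h j"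
      show "i = j"
      proof (rule ccontr)
        assume ij: "i \<noteq> j"
        have e: "h i \<in> M" "i \<in> h i" "j \<in> h i" using h[OF i] h[OF j] eq by auto
        obtain x y where xy: "x \<noteq> y" "h i = {x,y}" using pm_two[OF pM e(1)] by blast
        have "E x y" using edgeE[OF g mM] e(1) xy(2) by metis
        moreover have "(i = x \<and> j = y) \<or> (i = y \<and> j = x)" using e(2,3) xy(2) ij by auto
        ultimately have "E i j" using graph_sym[OF g] by auto
        then show False using indI i j by blast
      qed
    qed
    moreover have "h ` GE_I V E \<subseteq> M" using h by blast
    ultimately have c1: "card (GE_I V E) \<le> card M" using pm_fin[OF pM] by (meson card_inj_on_le)
    define k where "k = (\<lambda>e. SOME x. x \<in> e \<inter> GE_O V E)"
    have k: "\<And>e. e \<in> M \<Longrightarrow> k e \<in> e \<inter> GE_O V E"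
    proof -
      fix e assume "e \<in> M"
      then have "\<exists>x. x \<in> e \<inter> GE_O V E" using eO by blast
      then show "k e \<in> e \<inter> GE_O V E" unfolding k_def by (rule someI_ex)
    qed
    have "inj_on k M"
    proof (rule inj_onI)
      fix e1 e2 assume e1: "e1 \<in> M" and e2: "e2 \<in> M" and eq: "k e1 = k e2"
      show "e1 = e2" using pm_uniq[OF pM e1 e2, of "k e1"] k[OF e1] k[OF e2] eq by auto
    qed
    moreover have "k ` M \<subseteq> GE_O V E - {p0}" using k M(2) by blast
    moreover have "finite (GE_O V E - {p0})" using OV fV by (meson finite_Diff finite_subset)
    ultimately have c2: "card M \<le> card (GE_O V E - {p0})" by (meson card_inj_on_le)
    have "card (GE_O V E - {p0}) = card (GE_O V E) - 1" using o by simp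
    moreover have "card (GE_O V E) > 0"
    proof -
      have "finite (GE_O V E)" using OV fV by (rule finite_subset)
      then show ?thesis using o card_gt_0_iff by blast
    qed
    ultimately have cI: "int (card (GE_I V E)) - int (card (GE_O V E)) \<le> -1" using c1 c2 by linarith
    define S where "S = {int (card (nbhd V E X)) - int (card X) | X. X \<noteq> {} \<and> independent V E X}"
    have "S \<subseteq> (\<lambda>X. int (card (nbhd V E X)) - int (card X)) ` Pow V"
      unfolding S_def independent_def by blast
    then have fS: "finite S" using fV by (meson finite_Pow_iff finite_imageI finite_subset)
    have "int (card (GE_I V E)) - int (card (GE_O V E)) \<in> S"
      unfolding S_def GE_I_def using One Oind by blast
    then have "Min S \<le> int (card (GE_I V E)) - int (card (GE_O V E))" by (rule Min_le[OF fS])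
    then have "surplus V E \<le> -1" using cI unfolding surplus_def S_def by linarith
    then show False using s by linarith
  qed
qed




theorem lemma5:
  fixes V :: "'a set" and E :: "'a \<Rightarrow> 'a \<Rightarrow> bool"
  assumes "graph V E"
    and "V \<noteq> {}"
    and "surplus V E \<ge> 2"
    and "independent V E (GE_I V E \<union> GE_P V E)"
  shows "(\<exists>z\<in>GE_O V E. \<exists>u\<in>GE_O V E. \<exists>w\<in>GE_O V E. u \<noteq> w \<and> E z u \<and> E z w)
    \<and> (\<forall>z v. z \<in> GE_O V E \<longrightarrow> v \<in> GE_O V E \<longrightarrow> E z v \<longrightarrow>
         (\<exists>x\<in>GE_P (V - {z}) (induced E (V - {z})).
          \<exists>y\<in>GE_P (V - {z}) (induced E (V - {z})).
            induced E (V - {z}) x y))"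
proof -
  note g = assms(1)
  have IO: "\<And>x. x \<in> GE_I V E \<Longrightarrow> x \<notin> GE_O V E" unfolding GE_I_def nbhd_def by blast
  have indIP: "\<And>x y. x \<in> GE_I V E \<union> GE_P V E \<Longrightarrow> y \<in> GE_I V E \<union> GE_P V E \<Longrightarrow> \<not> E x y"
    using assms(4) unfolding independent_def by blast
  have cover: "\<And>x. x \<in> V \<Longrightarrow> x \<in> GE_O V E \<or> x \<in> GE_I V E"
  proof (rule ccontr)
    fix x assume xV: "x \<in> V" and n: "\<not> (x \<in> GE_O V E \<or> x \<in> GE_I V E)"
    then have xP: "x \<in> GE_P V E" unfolding GE_P_def by blast
    obtain M where M: "max_matching E M" using max_exists[OF g] by blast
    have mM: "matching E M" using M unfolding max_matching_def by blast
    have "x \<in> \<Union>M" using inO[OF xV M] n by blast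
    then obtain q where q: "{x,q} \<in> M" "E x q" "q \<noteq> x" "q \<in> V" using other_edge[OF g mM] by blast
    show False
    proof (cases "q \<in> GE_O V E")
      case True
      have "E q x" using graph_sym[OF g q(2)] .
      then have "x \<in> GE_I V E" using True xV n unfolding GE_I_def nbhd_def by blast
      then show False using n by blast
    next
      case False
      then have "q \<in> GE_I V E \<union> GE_P V E" using q(4) unfolding GE_P_def by blast
      then show False using indIP xP q(2) by blast
    qed
  qed
  have P1: "\<exists>z\<in>GE_O V E. \<exists>u\<in>GE_O V E. \<exists>w\<in>GE_O V E. u \<noteq> w \<and> E z u \<and> E z w"
    using part1[OF g assms(2,3,4) cover IO] .
  have P2: "\<forall>z v. z \<in> GE_O V E \<longrightarrow> v \<in> GE_O V E \<longrightarrow> E z v \<longrightarrow>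
         (\<exists>x\<in>GE_P (V - {z}) (induced E (V - {z})).
          \<exists>y\<in>GE_P (V - {z}) (induced E (V - {z})).
            induced E (V - {z}) x y)"
  proof (intro allI impI)
    fix z v assume zO: "z \<in> GE_O V E" and vO: "v \<in> GE_O V E" and zv: "E z v"
    obtain M where M: "max_matching E M" "z \<notin> \<Union>M" using zO unfolding GE_O_def by blast
    have mM: "matching E M" using M(1) unfolding max_matching_def by blast
    have "v \<in> \<Union>M" using augment[OF g M(1) zv M(2)] by blast
    then obtain w where w: "{v,w} \<in> M" "E v w" "w \<noteq> v" "w \<in> V" using other_edge[OF g mM] by blast
    have wz: "w \<noteq> z" using w(1) M(2) by blast
    have vz: "v \<noteq> z" using zv graph_irr[OF g] by blast
    have vV: "v \<in> V" using graph_V[OF g zv] by blast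
    have wO: "w \<in> GE_O V E"
    proof (rule ccontr)
      assume "w \<notin> GE_O V E"
      then have wI: "w \<in> GE_I V E" using cover w(4) by blast
      have "max_matching E (insert {z,v} (M - {{v,w}})) \<and> w \<notin> \<Union>(insert {z,v} (M - {{v,w}}))"
        using exch[OF g M(1) w(1) M(2) zv] .
      then have "w \<in> GE_O V E" using inO[OF w(4)] by blast
      then show False using \<open>w \<notin> GE_O V E\<close> by blast
    qed
    define V' where "V' = V - {z}"
    define E' where "E' = induced E V'"
    have edgesE': "edges E' = {e \<in> edges E. z \<notin> e}"
    proof
      show "edges E' \<subseteq> {e \<in> edges E. z \<notin> e}"
        unfolding edges_def E'_def induced_def V'_def by auto
      show "{e \<in> edges E. z \<notin> e} \<subseteq> edges E'"
      proof
        fix e assume e: "e \<in> {e \<in> edges E. z \<notin> e}"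
        then obtain x y where xy: "e = {x,y}" "E x y" unfolding edges_def by auto
        have "x \<in> V" "y \<in> V" using graph_V[OF g xy(2)] by auto
        moreover have "x \<noteq> z" "y \<noteq> z" using e xy(1) by auto
        ultimately have "E' x y" using xy(2) unfolding E'_def induced_def V'_def by auto
        then show "e \<in> edges E'" using xy(1) unfolding edges_def by auto
      qed
    qed
    have mE': "\<And>N. matching E' N \<longleftrightarrow> matching E N \<and> z \<notin> \<Union>N"
      unfolding matching_def edgesE' by auto
    have maxE': "\<And>N. max_matching E' N \<longleftrightarrow> max_matching E N \<and> z \<notin> \<Union>N"
    proof
      fix N assume N: "max_matching E' N"
      then have mN: "matching E N" "z \<notin> \<Union>N" using mE' unfolding max_matching_def by auto
      have "matching E' M" using mE' mM M(2) by blast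
      then have "card M \<le> card N" using N unfolding max_matching_def by blast
      moreover have "\<forall>M'. matching E M' \<longrightarrow> card M' \<le> card M" using M(1) unfolding max_matching_def by blast
      ultimately show "max_matching E N \<and> z \<notin> \<Union>N" using mN unfolding max_matching_def by force
    next
      fix N assume N: "max_matching E N \<and> z \<notin> \<Union>N"
      then show "max_matching E' N" using mE' unfolding max_matching_def by auto
    qed
    have O'sub: "\<And>y. y \<in> GE_O V' E' \<Longrightarrow> y \<in> GE_O V E \<and> y \<noteq> z \<and> (\<exists>N. max_matching E N \<and> z \<notin> \<Union>N \<and> y \<notin> \<Union>N)"
    proof -
      fix y assume y: "y \<in> GE_O V' E'"
      then obtain N where N: "max_matching E' N" "y \<notin> \<Union>N" "y \<in> V'" unfolding GE_O_def by blast
      then have N2: "max_matching E N" "z \<notin> \<Union>N" using maxE' by auto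
      have "y \<in> GE_O V E" using inO[of y V E N] N N2 unfolding V'_def by blast
      then show "y \<in> GE_O V E \<and> y \<noteq> z \<and> (\<exists>N. max_matching E N \<and> z \<notin> \<Union>N \<and> y \<notin> \<Union>N)"
        using N N2 unfolding V'_def by blast
    qed
    have noO': "\<And>y n. y \<in> GE_O V' E' \<Longrightarrow> oreach (GE_O V E) E n z y \<Longrightarrow> False"
    proof -
      fix y n assume y: "y \<in> GE_O V' E'" and r: "oreach (GE_O V E) E n z y"
      obtain N where N: "max_matching E N" "z \<notin> \<Union>N" "y \<notin> \<Union>N" "y \<in> GE_O V E" "y \<noteq> z"
        using O'sub[OF y] by blast
      show False using gallai[OF g r N(1) zO N(4)] N(2,3,5) by metis
    qed
    have r1: "oreach (GE_O V E) E (Suc 0) z v" using zO zv by auto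
    have r2: "oreach (GE_O V E) E (Suc (Suc 0)) z w" using r1 vO w(2) by auto
    have vO': "v \<notin> GE_O V' E'" using noO' r1 by blast
    have wO': "w \<notin> GE_O V' E'" using noO' r2 by blast
    have vI': "v \<notin> GE_I V' E'"
    proof
      assume "v \<in> GE_I V' E'"
      then obtain y where y: "y \<in> GE_O V' E'" "E' y v" unfolding GE_I_def nbhd_def by blast
      have "E v y" using y(2) graph_sym[OF g] unfolding E'_def induced_def by blast
      then have "oreach (GE_O V E) E (Suc (Suc 0)) z y" using r1 vO by auto
      then show False using noO' y(1) by blast
    qed
    have wI': "w \<notin> GE_I V' E'"
    proof
      assume "w \<in> GE_I V' E'"
      then obtain y where y: "y \<in> GE_O V' E'" "E' y w" unfolding GE_I_def nbhd_def by blast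
      have "E w y" using y(2) graph_sym[OF g] unfolding E'_def induced_def by blast
      then have "oreach (GE_O V E) E (Suc (Suc (Suc 0))) z y" using r2 wO by auto
      then show False using noO' y(1) by blast
    qed
    have vP: "v \<in> GE_P V' E'" unfolding GE_P_def using vO' vI' vV vz unfolding V'_def by blast
    have wP: "w \<in> GE_P V' E'" unfolding GE_P_def using wO' wI' w(4) wz unfolding V'_def by blast
    have "E' v w" unfolding E'_def induced_def V'_def using w(2,4) vV vz wz by blast
    then show "\<exists>x\<in>GE_P (V - {z}) (induced E (V - {z})).
          \<exists>y\<in>GE_P (V - {z}) (induced E (V - {z})).
            induced E (V - {z}) x y" using vP wP unfolding E'_def V'_def by blast
  qed
  show ?thesis using P1 P2 by blast
qed


end
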